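(* Let $\mathcal{S}_m\subset\mathcal{S}_n\subset\mathcal{T}$ be nested subsets of the training set with $|\mathcal{S}_m|=m<n=|\mathcal{S}_n|$, let $L_m,L_n$ be the corresponding empirical losses and $R_m,R_n$ the corresponding regularized empirical risks, with minimizers $\mathbf{w}_m^*,\mathbf{w}_n^*$. Let $\mathbf{w}_m$ be a (possibly random) vector such that $\mathbb{E}[R_m(\mathbf{w}_m)-R_m(\mathbf{w}_m^* )]\le \delta_m$. Then $$\mathbb{E}[R_n(\mathbf{w}_m)-R_n(\mathbf{w}_n^* )]\le \delta_m+\frac{2(n-m)}{n}\left(V_{n-m}+V_m\right)+2\left(V_m-V_n\right)+\frac{c(V_m-V_n)}{2}\|\mathbf{w}^*\|^2 .$$
   Context: Let $Z$ be a random variable with distribution $P$ on a space $\mathcal{Z}$ and $f:\mathbb{R}^p\times\mathcal{Z}\to\mathbb{R}$ a loss function. The expected loss is $L(\mathbf{w})=\mathbb{E}_Z[f(\mathbf{w},Z)]$ and $\mathbf{w}^*$ denotes a minimizer of $L$. The training set $\mathcal{T}=\{z_1,\dots,z_N\}$ consists of $N$ independent samples from $P$. For a (fixed, data-independent) subset $\mathcal{S}\subseteq\mathcal{T}$ with $k$ elements, the empirical loss is $L_{\mathcal{S}}(\mathbf{w})=\frac1k\sum_{z\in\mathcal{S}}f(\mathbf{w},z)$; for the sets $\mathcal{S}_k$ we write $L_k=L_{\mathcal{S}_k}$. Standing assumption: there are positive constants $V_k$ ($k\ge1$), nonincreasing in $k$, such that for every $k$ and every set $\mathcal{S}$ of $k$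 independent samples from $P$, $\mathbb{E}[\sup_{\mathbf{w}\in\mathbb{R}^p}|L(\mathbf{w})-L_{\mathcal{S}}(\mathbf{w})|]\le V_k$, where the expectation is over the samples. For a constant $c>0$ the regularized empirical risk is $R_k(\mathbf{w})=L_k(\mathbf{w})+\frac{cV_k}{2}\|\mathbf{w}\|^2$, with minimizer $\mathbf{w}_k^*$. Assumption: for every $z$, $f(\cdot,z)$ is convex and its gradient is $M$-Lipschitz continuous. Expectations in the claim are over the choice of the training samples (and any randomness in $\mathbf{w}_m$). *)

theory Defs
  imports "HOL-Probability.Probability"
begin

definition exp_loss :: "'z measure \<Rightarrow> ('w \<Rightarrow> 'z \<Rightarrow> real) \<Rightarrow> 'w \<Rightarrow> real" where
  "exp_loss P f w = (\<integral>z. f w z \<partial>P)"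

text \<open>Empirical loss on the samples indexed by I (training samples Z i, i in I),
  evaluated at the outcome omega of the underlying probability space.\<close>
definition emp_loss :: "('w \<Rightarrow> 'z \<Rightarrow> real) \<Rightarrow> (nat \<Rightarrow> 'o \<Rightarrow> 'z) \<Rightarrow> nat set \<Rightarrow> 'w \<Rightarrow> 'o \<Rightarrow> real" where
  "emp_loss f Z I w \<omega> = (\<Sum>i\<in>I. f w (Z i \<omega>)) / real (card I)"

definition reg_risk :: "('w::real_normed_vector \<Rightarrow> 'z \<Rightarrow> real) \<Rightarrow> (nat \<Rightarrow> 'o \<Rightarrow> 'z) \<Rightarrow> (nat \<Rightarrow> real) \<Rightarrow> real
      \<Rightarrow> nat set \<Rightarrow> 'w \<Rightarrow> 'o \<Rightarrow> real" where
  "reg_risk f Z V c I w \<omega> = emp_loss f Z I w \<omega> + c * V (card I) / 2 * (norm w)\<^sup>2"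

end

theory Submission
  imports Defs
begin


lemma dense_seq:
  "\<exists>D::('a::{metric_space, second_countable_topology}) set. countable D \<and> (\<forall>w. \<exists>s. (\<forall>k. s k \<in> D) \<and> s \<longlonglongrightarrow> w)"
proof -
  obtain D :: "'a set" where D: "countable D" "\<And>U. open U \<Longrightarrow> U \<noteq> {} \<Longrightarrow> \<exists>y\<in>D. y \<in> U"
    using countable_dense_exists by blast
  have "w \<in> closure D" for w
  proof (subst closure_approachable, intro allI impI)
    fix e :: real assume "e > 0"
    then obtain y where "y \<in> D" "y \<in> ball w e" using D(2)[of "ball w e"] by auto
    then show "\<exists>y\<in>D. dist y w < e" by (auto simp: dist_commute)
  qed
  then show ?thesis using D(1) by (metis closure_sequential)
qed

lemma sup_dense:
  fixes g :: "'a::metric_space \<Rightarrow> real"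
  assumes g: "continuous_on UNIV g" and D: "\<forall>w. \<exists>s. (\<forall>k. s k \<in> D) \<and> s \<longlonglongrightarrow> w"
  shows "(SUP w. ennreal (g w)) = (SUP d\<in>D. ennreal (g d))"
proof (rule antisym)
  show "(SUP w. ennreal (g w)) \<le> (SUP d\<in>D. ennreal (g d))"
  proof (rule SUP_least)
    fix w
    obtain s where s: "\<forall>k. s k \<in> D" "s \<longlonglongrightarrow> w" using D by blast
    have "(\<lambda>k. g (s k)) \<longlonglongrightarrow> g w"
      using continuous_on_tendsto_compose[OF g s(2)] by auto
    then have "(\<lambda>k. ennreal (g (s k))) \<longlonglongrightarrow> ennreal (g w)"
      by (rule tendsto_ennrealI)
    moreover have "\<forall>k. ennreal (g (s k)) \<le> (SUP d\<in>D. ennreal (g d))"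
      using s(1) by (auto intro: SUP_upper)
    ultimately show "ennreal (g w) \<le> (SUP d\<in>D. ennreal (g d))"
      by (meson LIMSEQ_le_const2)
  qed
  show "(SUP d\<in>D. ennreal (g d)) \<le> (SUP w. ennreal (g w))"
    by (rule SUP_subset_mono) auto
qed

lemma less_dense:
  fixes g :: "'a::metric_space \<Rightarrow> real"
  assumes g: "continuous_on UNIV g" and D: "\<forall>w. \<exists>s. (\<forall>k. s k \<in> D) \<and> s \<longlonglongrightarrow> w"
    and "g w < a"
  shows "\<exists>d\<in>D. g d < a"
proof -
  obtain s where s: "\<forall>k. s k \<in> D" "s \<longlonglongrightarrow> w" using D by blast
  have "(\<lambda>k. g (s k)) \<longlonglongrightarrow> g w"
    using continuous_on_tendsto_compose[OF g s(2)] by auto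
  then have "eventually (\<lambda>k. g (s k) < a) sequentially"
    using assms(3) by (rule order_tendstoD)
  then obtain K where "\<forall>k\<ge>K. g (s k) < a" unfolding eventually_sequentially by blast
  then have "g (s K) < a" by simp
  then show ?thesis using s(1) by blast
qed



lemma floor_approx:
  fixes x :: real
  shows "(\<lambda>k::nat. real_of_int \<lfloor>x * 2^k\<rfloor> / 2^k) \<longlonglongrightarrow> x"
proof (rule real_tendsto_sandwich[where f="\<lambda>k. x - (1/2)^k" and h="\<lambda>k. x"])
  show "\<forall>\<^sub>F k in sequentially. x - (1/2)^k \<le> real_of_int \<lfloor>x * 2^k\<rfloor> / 2^k"
  proof (intro always_eventually allI)
    fix k :: nat
    have "x * 2^k - 1 \<le> real_of_int \<lfloor>x * 2^k\<rfloor>" by linarith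
    then have "(x * 2^k - 1) / 2^k \<le> real_of_int \<lfloor>x * 2^k\<rfloor> / 2^k"
      by (simp add: divide_right_mono)
    moreover have "(x * 2^k - 1) / 2^k = x - (1/2)^k" by (simp add: field_simps)
    ultimately show "x - (1/2)^k \<le> real_of_int \<lfloor>x * 2^k\<rfloor> / 2^k" by simp
  qed
  show "\<forall>\<^sub>F k in sequentially. real_of_int \<lfloor>x * 2^k\<rfloor> / 2^k \<le> x"
  proof (intro always_eventually allI)
    fix k :: nat
    have "real_of_int \<lfloor>x * 2^k\<rfloor> \<le> x * 2^k" by linarith
    then show "real_of_int \<lfloor>x * 2^k\<rfloor> / 2^k \<le> x" by (simp add: divide_le_eq)
  qed
  have "(\<lambda>k::nat. (1/2::real)^k) \<longlonglongrightarrow> 0" by (rule LIMSEQ_realpow_zero) auto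
  then show "(\<lambda>k. x - (1/2)^k) \<longlonglongrightarrow> x" using tendsto_diff[OF tendsto_const, of _ 0 sequentially x] by simp
  show "(\<lambda>k. x) \<longlonglongrightarrow> x" by simp
qed

lemma carath_meas:
  fixes F :: "real^'p \<Rightarrow> 'z \<Rightarrow> real" and W :: "'o \<Rightarrow> real^'p"
  assumes cont: "\<forall>z\<in>space P. continuous_on UNIV (\<lambda>w. F w z)" and Fm: "\<forall>w. F w \<in> borel_measurable P"
    and X: "X \<in> measurable M P" and W: "W \<in> borel_measurable M"
  shows "(\<lambda>\<omega>. F (W \<omega>) (X \<omega>)) \<in> borel_measurable M"
proof -
  define q where "q k w = (\<chi> j. real_of_int \<lfloor>w$j * 2^k\<rfloor> / 2^k)" for k::nat and w :: "real^'p"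
  define C where "C k = (\<lambda>v. \<chi> j. real_of_int (v j) / 2^k) ` (UNIV :: ('p \<Rightarrow> int) set)" for k :: nat
  have conv: "(\<lambda>k. q k w) \<longlonglongrightarrow> w" for w
  proof -
    have "(\<lambda>k. \<chi> j. real_of_int \<lfloor>w$j * 2^k\<rfloor> / 2^k) \<longlonglongrightarrow> (\<chi> j. w$j)"
      by (intro tendsto_vec_lambda floor_approx)
    then show ?thesis by (simp add: q_def)
  qed
  have cC: "countable (C k)" for k unfolding C_def by simp
  have qC: "q k w \<in> C k" for k w
    unfolding q_def C_def by (rule image_eqI[where x="\<lambda>j. \<lfloor>w$j * 2^k\<rfloor>"]) auto
  have Wj: "(\<lambda>\<omega>. W \<omega> $ j) \<in> borel_measurable M" for j
    using measurable_compose[OF W borel_measurable_continuous_onI[OF continuous_on_component[OF continuous_on_id]]] .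
  have mq: "(\<lambda>\<omega>. q k (W \<omega>)) \<in> measurable M (count_space (C k))" for k
  proof (subst measurable_count_space_eq_countable[OF cC], intro conjI ballI)
    show "(\<lambda>\<omega>. q k (W \<omega>)) \<in> space M \<rightarrow> C k" using qC by auto
    fix c assume "c \<in> C k"
    have "(\<lambda>\<omega>. q k (W \<omega>)) -` {c} \<inter> space M = {\<omega>\<in>space M. \<forall>j. real_of_int \<lfloor>W \<omega> $ j * 2^k\<rfloor> / 2^k = c$j}"
      by (auto simp: q_def vec_eq_iff)
    also have "\<dots> \<in> sets M"
      using Wj by measurable
    finally show "(\<lambda>\<omega>. q k (W \<omega>)) -` {c} \<inter> space M \<in> sets M" .
  qed
  have mk: "(\<lambda>\<omega>. F (q k (W \<omega>)) (X \<omega>)) \<in> borel_measurable M" for k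
    by (rule measurable_compose_countable'[where f="\<lambda>i \<omega>. F i (X \<omega>)", OF _ mq cC])
       (rule measurable_compose[OF X], use Fm in auto)
  show ?thesis
  proof (rule borel_measurable_LIMSEQ_real[OF _ mk])
    fix \<omega> assume "\<omega> \<in> space M"
    then have "X \<omega> \<in> space P" using X by (auto simp: measurable_def)
    then show "(\<lambda>k. F (q k (W \<omega>)) (X \<omega>)) \<longlonglongrightarrow> F (W \<omega>) (X \<omega>)"
      using continuous_on_tendsto_compose[OF _ conv, of UNIV "\<lambda>w. F w (X \<omega>)"] cont by auto
  qed
qed



lemma key_ineq:
  fixes nn mm Lna Lma Lda Lnb Lmb Ldb La Lb Ls Lns Um Ud Unn Rmms lm ln A B S :: real
  assumes mm: "0 < mm" "mm < nn"
    and hLa: "nn*Lna = mm*Lma + (nn-mm)*Lda"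
    and hLb: "nn*Lnb = mm*Lmb + (nn-mm)*Ldb"
    and u1: "\<bar>La - Lma\<bar> \<le> Um" and u2: "\<bar>La - Lda\<bar> \<le> Ud"
    and u3: "\<bar>Lb - Lmb\<bar> \<le> Um" and u4: "\<bar>Lb - Ldb\<bar> \<le> Ud"
    and u5: "\<bar>Lb - Lnb\<bar> \<le> Unn" and u6: "\<bar>Ls - Lns\<bar> \<le> Unn"
    and sb: "Ls \<le> Lb"
    and mmin: "Rmms \<le> Lmb + lm/2*B"
    and nmin: "Lnb + ln/2*B \<le> Lns + ln/2*S"
    and l: "0 < ln" "ln \<le> lm" and AB: "0 \<le> A"
  shows "Lna + ln/2*A - (Lnb + ln/2*B) \<le> (Lma + lm/2*A - Rmms) + 2*(nn-mm)/nn*(Ud+Um)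
          + (lm-ln)/2*S + 2*(lm-ln)/ln*Unn"
proof -
  have nn: "nn > 0" using mm by linarith
  have e1: "Lna - Lma = (nn-mm)/nn*(Lda - Lma)" using hLa nn by (simp add: field_simps)
  have "Lda - Lma \<le> Ud + Um" using u1 u2 by linarith
  then have s1: "Lna - Lma \<le> (nn-mm)/nn*(Ud+Um)" unfolding e1
    by (rule mult_left_mono) (use mm in simp)
  have e2: "Lmb - Lnb = (nn-mm)/nn*(Lmb - Ldb)" using hLb nn by (simp add: field_simps)
  have "Lmb - Ldb \<le> Ud + Um" using u3 u4 by linarith
  then have s2: "Lmb - Lnb \<le> (nn-mm)/nn*(Ud+Um)" unfolding e2
    by (rule mult_left_mono) (use mm in simp)
  have "ln/2*B \<le> ln/2*S + 2*Unn" using nmin u5 u6 sb by linarith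
  then have "ln*B \<le> ln*S + 4*Unn" by linarith
  then have "B \<le> S + 4*Unn/ln" using l by (simp add: field_simps)
  then have s3: "(lm-ln)/2*B \<le> (lm-ln)/2*(S + 4*Unn/ln)"
    by (rule mult_left_mono) (use l in simp)
  have s3': "(lm-ln)/2*(S + 4*Unn/ln) = (lm-ln)/2*S + 2*(lm-ln)/ln*Unn"
    by (simp add: field_simps)
  have s4: "ln/2*A \<le> lm/2*A" using l AB by (simp add: mult_right_mono)
  have s5: "2*(nn-mm)/nn*(Ud+Um) = (nn-mm)/nn*(Ud+Um) + (nn-mm)/nn*(Ud+Um)" by simp
  have s6: "(lm-ln)/2*B = lm/2*B - ln/2*B" by (simp add: field_simps)
  show ?thesis using s1 s2 s3 s3' s4 s5 s6 mmin by (smt (verit))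
qed



lemma U_facts:
  fixes u :: "'o \<Rightarrow> ennreal"
  assumes "prob_space M" "u \<in> borel_measurable M" "(\<integral>\<^sup>+\<omega>. u \<omega> \<partial>M) \<le> ennreal v" "0 \<le> v"
  shows "integrable M (\<lambda>\<omega>. enn2real (u \<omega>))" "(\<integral>\<omega>. enn2real (u \<omega>) \<partial>M) \<le> v" "AE \<omega> in M. u \<omega> \<noteq> \<infinity>"
proof -
  have fin: "(\<integral>\<^sup>+\<omega>. u \<omega> \<partial>M) \<noteq> \<infinity>" using assms(3) by (auto simp: top_unique)
  show ae: "AE \<omega> in M. u \<omega> \<noteq> \<infinity>" by (rule nn_integral_PInf_AE[OF assms(2) fin])
  have eq: "(\<integral>\<^sup>+\<omega>. ennreal (enn2real (u \<omega>)) \<partial>M) = (\<integral>\<^sup>+\<omega>. u \<omega> \<partial>M)"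
    by (rule nn_integral_cong_AE) (use ae in \<open>auto simp: less_top\<close>)
  obtain r where r: "(\<integral>\<^sup>+\<omega>. u \<omega> \<partial>M) = ennreal r" "0 \<le> r"
    using fin by (cases "(\<integral>\<^sup>+\<omega>. u \<omega> \<partial>M)") auto
  show int: "integrable M (\<lambda>\<omega>. enn2real (u \<omega>))"
    by (rule integrableI_nn_integral_finite[where x=r]) (use assms(2) eq r in auto)
  have "ennreal (\<integral>\<omega>. enn2real (u \<omega>) \<partial>M) = (\<integral>\<^sup>+\<omega>. ennreal (enn2real (u \<omega>)) \<partial>M)"
    by (rule nn_integral_eq_integral[OF int, symmetric]) auto
  also have "\<dots> \<le> ennreal v" using eq assms(3) by simp
  finally show "(\<integral>\<omega>. enn2real (u \<omega>) \<partial>M) \<le> v" using assms(4) by (simp add: ennreal_le_iff)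
qed

lemma emp_cont:
  assumes "\<And>i. i\<in>I \<Longrightarrow> continuous_on UNIV (\<lambda>w. f w (Z i \<omega>))"
  shows "continuous_on UNIV (\<lambda>w. emp_loss f Z I w \<omega>)"
  unfolding emp_loss_def divide_inverse using assms
  by (intro continuous_intros) auto

lemma emp_meas:
  fixes f :: "real^'p \<Rightarrow> 'z \<Rightarrow> real" and W :: "'o \<Rightarrow> real^'p"
  assumes cont: "\<forall>z\<in>space P. continuous_on UNIV (\<lambda>w. f w z)" and Fm: "\<forall>w. f w \<in> borel_measurable P"
    and X: "\<And>i. i \<in> I \<Longrightarrow> Z i \<in> measurable M P" and W: "W \<in> borel_measurable M"
  shows "(\<lambda>\<omega>. emp_loss f Z I (W \<omega>) \<omega>) \<in> borel_measurable M"
  unfolding emp_loss_def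
  by (intro borel_measurable_divide borel_measurable_sum borel_measurable_const carath_meas[OF cont Fm X W])

lemma emp_split:
  assumes "finite I"
  shows "real (card I) * emp_loss f Z I w \<omega> = (\<Sum>i\<in>I. f w (Z i \<omega>))"
  using assms by (cases "I = {}") (auto simp: emp_loss_def)



theorem proposition1:
  fixes M :: "'o measure" and P :: "'z measure" and Z :: "nat \<Rightarrow> 'o \<Rightarrow> 'z"
    and N :: nat and f :: "real ^ 'p \<Rightarrow> 'z \<Rightarrow> real"
    and V :: "nat \<Rightarrow> real" and c Mlip \<delta> :: real
    and Sm Sn :: "nat set" and m n :: nat
    and wstar :: "real ^ 'p" and wm wms wns :: "'o \<Rightarrow> real ^ 'p"
  assumes prob: "prob_space M"
    and samples_indep: "prob_space.indep_vars M (\<lambda>_. P) Z {..<N}"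
    and samples_distr: "\<forall>i<N. distr M P (Z i) = P"
    and loss_integrable: "\<forall>w. integrable P (f w)"
    and loss_convex: "\<forall>z\<in>space P. convex_on UNIV (\<lambda>w. f w z)"
    and loss_grad_lipschitz: "\<forall>z\<in>space P. \<exists>g. (\<forall>w. ((\<lambda>v. f v z) has_derivative (\<lambda>h. g w \<bullet> h)) (at w))
                                      \<and> Mlip-lipschitz_on UNIV g"
    and wstar_min: "\<forall>w. exp_loss P f wstar \<le> exp_loss P f w"
    and V_pos: "\<forall>k\<ge>1. V k > 0"
    and V_noninc: "\<forall>k l. 1 \<le> k \<longrightarrow> k \<le> l \<longrightarrow> V l \<le> V k"
    and V_bound: "\<forall>I. I \<subseteq> {..<N} \<longrightarrow> I \<noteq> {} \<longrightarrow>
         (\<integral>\<^sup>+ \<omega>. (\<Squnion>w. ennreal \<bar>exp_loss P f w - emp_loss f Z I w \<omega>\<bar>) \<partial>M) \<le> ennreal (V (card I))"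
    and c_pos: "c > 0"
    and nested: "Sm \<subseteq> Sn" "Sn \<subseteq> {..<N}"
    and card_Sm: "card Sm = m" and card_Sn: "card Sn = n"
    and m_pos: "0 < m" and m_lt_n: "m < n"
    and wms_min: "\<forall>\<omega>\<in>space M. \<forall>w. reg_risk f Z V c Sm (wms \<omega>) \<omega> \<le> reg_risk f Z V c Sm w \<omega>"
    and wns_min: "\<forall>\<omega>\<in>space M. \<forall>w. reg_risk f Z V c Sn (wns \<omega>) \<omega> \<le> reg_risk f Z V c Sn w \<omega>"
    and wm_meas: "wm \<in> borel_measurable M"
    and wm_integrable: "integrable M (\<lambda>\<omega>. reg_risk f Z V c Sm (wm \<omega>) \<omega> - reg_risk f Z V c Sm (wms \<omega>) \<omega>)"
    and wm_accuracy: "(\<integral>\<omega>. reg_risk f Z V c Sm (wm \<omega>) \<omega> - reg_risk f Z V c Sm (wms \<omega>) \<omega> \<partial>M) \<le> \<delta>"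
  shows "integrable M (\<lambda>\<omega>. reg_risk f Z V c Sn (wm \<omega>) \<omega> - reg_risk f Z V c Sn (wns \<omega>) \<omega>)
       \<and> (\<integral>\<omega>. reg_risk f Z V c Sn (wm \<omega>) \<omega> - reg_risk f Z V c Sn (wns \<omega>) \<omega> \<partial>M)
         \<le> \<delta> + 2 * real (n - m) / real n * (V (n - m) + V m) + 2 * (V m - V n)
            + c * (V m - V n) / 2 * (norm wstar)\<^sup>2"
proof -
  interpret prob_space M by (rule prob)
  have Zm: "Z i \<in> measurable M P" if "i < N" for i
    using samples_indep that unfolding indep_vars_def2 by auto
  have fcont: "\<forall>z\<in>space P. continuous_on UNIV (\<lambda>w. f w z)"
  proof
    fix z assume "z \<in> space P"
    then obtain g where g: "\<forall>w. ((\<lambda>v. f v z) has_derivative (\<lambda>h. g w \<bullet> h)) (at w)"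
      using loss_grad_lipschitz by blast
    show "continuous_on UNIV (\<lambda>w. f w z)"
      using g by (intro continuous_at_imp_continuous_on) (auto intro: has_derivative_continuous)
  qed
  have fm: "\<forall>w. f w \<in> borel_measurable P" using loss_integrable by auto
  have Lconv: "convex_on UNIV (exp_loss P f)"
  proof (rule convex_onI)
    fix t :: real and x y :: "real^'p" assume t: "0 < t" "t < 1"
    have "exp_loss P f ((1 - t) *\<^sub>R x + t *\<^sub>R y) \<le> (\<integral>z. (1 - t) * f x z + t * f y z \<partial>P)"
      unfolding exp_loss_def
      by (rule integral_mono) (use loss_integrable loss_convex t in \<open>auto intro!: convex_onD\<close>)
    also have "\<dots> = (1 - t) * exp_loss P f x + t * exp_loss P f y"
      unfolding exp_loss_def using loss_integrable by simp
    finally show "exp_loss P f ((1 - t) *\<^sub>R x + t *\<^sub>R y) \<le> (1 - t) * exp_loss P f x + t * exp_loss P f y" .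
  qed simp
  have Lcont: "continuous_on UNIV (exp_loss P f)"
    by (rule convex_on_continuous[OF open_UNIV Lconv])
  obtain D :: "(real^'p) set" where D: "countable D" "\<forall>w. \<exists>s. (\<forall>k. s k \<in> D) \<and> s \<longlonglongrightarrow> w"
    using dense_seq by blast
  have Zsp: "Z i \<omega> \<in> space P" if "i < N" "\<omega> \<in> space M" for i \<omega>
    using Zm[OF that(1)] that(2) by (auto simp: measurable_def)
  have fin: "finite I" if "I \<subseteq> {..<N}" for I using that finite_subset by blast
  have econt: "continuous_on UNIV (\<lambda>w. emp_loss f Z I w \<omega>)" if "I \<subseteq> {..<N}" "\<omega> \<in> space M" for I \<omega>
    by (rule emp_cont) (use that fcont Zsp in auto)
  have emeas: "(\<lambda>\<omega>. emp_loss f Z I (W \<omega>) \<omega>) \<in> borel_measurable M"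
    if "I \<subseteq> {..<N}" "W \<in> borel_measurable M" for I and W :: "'o \<Rightarrow> real^'p"
    by (rule emp_meas[OF fcont fm _ that(2)]) (use that Zm in auto)
  have emeasc: "(\<lambda>\<omega>. emp_loss f Z I w \<omega>) \<in> borel_measurable M" if "I \<subseteq> {..<N}" for I w
    using emeas[OF that, of "\<lambda>_. w"] by simp
  define u where "u I \<omega> = (\<Squnion>w. ennreal \<bar>exp_loss P f w - emp_loss f Z I w \<omega>\<bar>)" for I \<omega>
  define U where "U I \<omega> = enn2real (u I \<omega>)" for I \<omega>
  have umeas: "u I \<in> borel_measurable M" if "I \<subseteq> {..<N}" for I
  proof -
    have "u I \<omega> = (SUP d\<in>D. ennreal \<bar>exp_loss P f d - emp_loss f Z I d \<omega>\<bar>)" if "\<omega> \<in> space M" for \<omega>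
      unfolding u_def
      by (rule sup_dense[OF _ D(2)]) (intro continuous_intros Lcont econt, use \<open>I \<subseteq> _\<close> that in auto)
    moreover have "(\<lambda>\<omega>. SUP d\<in>D. ennreal \<bar>exp_loss P f d - emp_loss f Z I d \<omega>\<bar>) \<in> borel_measurable M"
      using D(1) emeasc[OF that] by measurable
    ultimately show ?thesis by (simp cong: measurable_cong)
  qed
  have Ufacts: "integrable M (U I) \<and> (\<integral>\<omega>. U I \<omega> \<partial>M) \<le> V (card I) \<and>
      (AE \<omega> in M. \<forall>w. \<bar>exp_loss P f w - emp_loss f Z I w \<omega>\<bar> \<le> U I \<omega>)"
    if I: "I \<subseteq> {..<N}" "I \<noteq> {}" for I
  proof -
    have "card I \<ge> 1" using I fin[OF I(1)] by (metis One_nat_def Suc_leI card_gt_0_iff)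
    then have Vp: "0 \<le> V (card I)" using V_pos less_imp_le by blast
    have bd: "(\<integral>\<^sup>+\<omega>. u I \<omega> \<partial>M) \<le> ennreal (V (card I))" using V_bound I(1) I(2) unfolding u_def by presburger
    note F = U_facts[OF prob umeas[OF I(1)] bd Vp]
    have pw: "\<bar>exp_loss P f w - emp_loss f Z I w \<omega>\<bar> \<le> U I \<omega>" if om: "u I \<omega> \<noteq> \<infinity>" for \<omega> w
    proof -
      have "ennreal \<bar>exp_loss P f w - emp_loss f Z I w \<omega>\<bar> \<le> u I \<omega>"
        unfolding u_def by (rule SUP_upper) simp
      then have "enn2real (ennreal \<bar>exp_loss P f w - emp_loss f Z I w \<omega>\<bar>) \<le> enn2real (u I \<omega>)"
        using om by (intro enn2real_mono) (auto simp: less_top)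
      then show ?thesis unfolding U_def by simp
    qed
    have "AE \<omega> in M. \<forall>w. \<bar>exp_loss P f w - emp_loss f Z I w \<omega>\<bar> \<le> U I \<omega>"
      by (rule eventually_mono[OF F(3)]) (use pw in blast)
    then show ?thesis using F(1,2) unfolding U_def by auto
  qed
  define Sd where "Sd = Sn - Sm"
  have finSn: "finite Sn" using fin nested by auto
  have cSd: "card Sd = n - m" unfolding Sd_def using card_Diff_subset[OF finite_subset[OF nested(1) finSn] nested(1)] card_Sm card_Sn by simp
  have Sm_ne: "Sm \<noteq> {}" using card_Sm m_pos by auto
  have Sd_ne: "Sd \<noteq> {}" using cSd m_lt_n by (auto)
  have SmN: "Sm \<subseteq> {..<N}" and SdN: "Sd \<subseteq> {..<N}" using nested unfolding Sd_def by auto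
  have Sn_ne: "Sn \<noteq> {}" using Sm_ne nested by auto
  note Um = Ufacts[OF SmN Sm_ne] and Ud = Ufacts[OF SdN Sd_ne] and Un = Ufacts[OF nested(2) Sn_ne]
  have Vm: "V m > 0" and Vn: "V n > 0" and Vd: "V (n - m) > 0" and Vmn: "V n \<le> V m"
    using V_pos V_noninc m_pos m_lt_n by auto
  have split: "real n * emp_loss f Z Sn w \<omega> = real m * emp_loss f Z Sm w \<omega> + (real n - real m) * emp_loss f Z Sd w \<omega>" for w \<omega>
  proof -
    have "real n * emp_loss f Z Sn w \<omega> = (\<Sum>i\<in>Sn. f w (Z i \<omega>))" using emp_split[OF finSn] card_Sn by simp
    also have "\<dots> = (\<Sum>i\<in>Sd. f w (Z i \<omega>)) + (\<Sum>i\<in>Sm. f w (Z i \<omega>))"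
      unfolding Sd_def by (rule sum.subset_diff[OF nested(1) finSn])
    also have "\<dots> = (real n - real m) * emp_loss f Z Sd w \<omega> + real m * emp_loss f Z Sm w \<omega>"
      using emp_split[OF finite_subset[OF _ finSn], of Sd f Z w \<omega>] emp_split[OF finite_subset[OF nested(1) finSn], of f Z w \<omega>]
        cSd card_Sm m_lt_n unfolding Sd_def
      by (simp add: of_nat_diff)
    finally show ?thesis by simp
  qed
  define Dn where "Dn \<omega> = reg_risk f Z V c Sn (wm \<omega>) \<omega> - reg_risk f Z V c Sn (wns \<omega>) \<omega>" for \<omega>
  define E1 where "E1 \<omega> = reg_risk f Z V c Sm (wm \<omega>) \<omega> - reg_risk f Z V c Sm (wms \<omega>) \<omega>" for \<omega>
  define G where "G \<omega> = E1 \<omega> + 2*(real n - real m)/real n*(U Sd \<omega> + U Sm \<omega>) + (c*V m - c*V n)/2*(norm wstar)\<^sup>2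
       + 2*(c*V m - c*V n)/(c*V n)*U Sn \<omega>" for \<omega>
  have rcont: "continuous_on UNIV (\<lambda>w. reg_risk f Z V c Sn w \<omega>)" if "\<omega> \<in> space M" for \<omega>
    unfolding reg_risk_def by (intro continuous_intros econt nested(2) that)
  have hmeas: "(\<lambda>\<omega>. reg_risk f Z V c Sn (wns \<omega>) \<omega>) \<in> borel_measurable M"
  proof (subst borel_measurable_iff_less, intro allI)
    fix a
    have "{\<omega>\<in>space M. reg_risk f Z V c Sn (wns \<omega>) \<omega> < a} = (\<Union>d\<in>D. {\<omega>\<in>space M. reg_risk f Z V c Sn d \<omega> < a})"
    proof safe
      fix \<omega> assume "\<omega> \<in> space M" "reg_risk f Z V c Sn (wns \<omega>) \<omega> < a"
      then obtain d where "d \<in> D" "reg_risk f Z V c Sn d \<omega> < a"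
        using less_dense[OF rcont D(2)] by blast
      then show "\<omega> \<in> (\<Union>d\<in>D. {\<omega>\<in>space M. reg_risk f Z V c Sn d \<omega> < a})" using \<open>\<omega> \<in> space M\<close> by blast
    next
      fix \<omega> d assume "\<omega> \<in> space M" "d \<in> D" "reg_risk f Z V c Sn d \<omega> < a"
      then show "reg_risk f Z V c Sn (wns \<omega>) \<omega> < a" using wns_min by (meson le_less_trans)
    qed
    also have "\<dots> \<in> sets M"
    proof (rule sets.countable_UN'[OF D(1)], safe)
      fix d
      have "(\<lambda>\<omega>. reg_risk f Z V c Sn d \<omega>) \<in> borel_measurable M"
        unfolding reg_risk_def using emeasc[OF nested(2)] by measurable
      then show "{\<omega>\<in>space M. reg_risk f Z V c Sn d \<omega> < a} \<in> sets M" by measurable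
    qed
    finally show "{\<omega>\<in>space M. reg_risk f Z V c Sn (wns \<omega>) \<omega> < a} \<in> sets M" .
  qed
  have Dmeas: "Dn \<in> borel_measurable M"
  proof -
    have "(\<lambda>\<omega>. reg_risk f Z V c Sn (wm \<omega>) \<omega>) \<in> borel_measurable M"
      unfolding reg_risk_def using emeas[OF nested(2) wm_meas] wm_meas by measurable
    then show ?thesis unfolding Dn_def using hmeas by measurable
  qed
  have Gint: "integrable M G"
    unfolding G_def E1_def using wm_integrable Um Ud Un by (intro Bochner_Integration.integrable_add integrable_mult_right integrable_const) auto
  have pwb: "0 \<le> Dn \<omega> \<and> Dn \<omega> \<le> G \<omega>"
    if om: "\<omega> \<in> space M" and bm: "\<forall>w. \<bar>exp_loss P f w - emp_loss f Z Sm w \<omega>\<bar> \<le> U Sm \<omega>"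
      and bd: "\<forall>w. \<bar>exp_loss P f w - emp_loss f Z Sd w \<omega>\<bar> \<le> U Sd \<omega>"
      and bn: "\<forall>w. \<bar>exp_loss P f w - emp_loss f Z Sn w \<omega>\<bar> \<le> U Sn \<omega>" for \<omega>
  proof
    have "reg_risk f Z V c Sn (wns \<omega>) \<omega> \<le> reg_risk f Z V c Sn (wm \<omega>) \<omega>" using wns_min om by blast
    then show "0 \<le> Dn \<omega>" unfolding Dn_def by simp
    have mmin: "reg_risk f Z V c Sm (wms \<omega>) \<omega> \<le> reg_risk f Z V c Sm (wns \<omega>) \<omega>" using wms_min om by blast
    have nmin: "reg_risk f Z V c Sn (wns \<omega>) \<omega> \<le> reg_risk f Z V c Sn wstar \<omega>" using wns_min om by blast
    have ki: "emp_loss f Z Sn (wm \<omega>) \<omega> + c * V n/2*(norm (wm \<omega>))\<^sup>2 - (emp_loss f Z Sn (wns \<omega>) \<omega> + c * V n/2*(norm (wns \<omega>))\<^sup>2)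
      \<le> (emp_loss f Z Sm (wm \<omega>) \<omega> + c * V m/2*(norm (wm \<omega>))\<^sup>2 - reg_risk f Z V c Sm (wms \<omega>) \<omega>)
         + 2*(real n - real m)/real n*(U Sd \<omega> + U Sm \<omega>) + (c*V m - c*V n)/2*(norm wstar)\<^sup>2
         + 2*(c*V m - c*V n)/(c*V n)*U Sn \<omega>"
    proof (rule key_ineq[where La="exp_loss P f (wm \<omega>)" and Lb="exp_loss P f (wns \<omega>)"
          and Ls="exp_loss P f wstar" and Lns="emp_loss f Z Sn wstar \<omega>"])
      show "0 < real m" "real m < real n" using m_pos m_lt_n by auto
      show "real n * emp_loss f Z Sn (wm \<omega>) \<omega> = real m * emp_loss f Z Sm (wm \<omega>) \<omega> + (real n - real m) * emp_loss f Z Sd (wm \<omega>) \<omega>"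
        by (rule split)
      show "real n * emp_loss f Z Sn (wns \<omega>) \<omega> = real m * emp_loss f Z Sm (wns \<omega>) \<omega> + (real n - real m) * emp_loss f Z Sd (wns \<omega>) \<omega>"
        by (rule split)
      show "\<bar>exp_loss P f (wm \<omega>) - emp_loss f Z Sm (wm \<omega>) \<omega>\<bar> \<le> U Sm \<omega>" using bm by blast
      show "\<bar>exp_loss P f (wm \<omega>) - emp_loss f Z Sd (wm \<omega>) \<omega>\<bar> \<le> U Sd \<omega>" using bd by blast
      show "\<bar>exp_loss P f (wns \<omega>) - emp_loss f Z Sm (wns \<omega>) \<omega>\<bar> \<le> U Sm \<omega>" using bm by blast
      show "\<bar>exp_loss P f (wns \<omega>) - emp_loss f Z Sd (wns \<omega>) \<omega>\<bar> \<le> U Sd \<omega>" using bd by blast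
      show "\<bar>exp_loss P f (wns \<omega>) - emp_loss f Z Sn (wns \<omega>) \<omega>\<bar> \<le> U Sn \<omega>" using bn by blast
      show "\<bar>exp_loss P f wstar - emp_loss f Z Sn wstar \<omega>\<bar> \<le> U Sn \<omega>" using bn by blast
      show "exp_loss P f wstar \<le> exp_loss P f (wns \<omega>)" using wstar_min by blast
      show "reg_risk f Z V c Sm (wms \<omega>) \<omega> \<le> emp_loss f Z Sm (wns \<omega>) \<omega> + c * V m / 2 * (norm (wns \<omega>))\<^sup>2"
        using mmin card_Sm unfolding reg_risk_def by simp
      show "emp_loss f Z Sn (wns \<omega>) \<omega> + c * V n / 2 * (norm (wns \<omega>))\<^sup>2 \<le> emp_loss f Z Sn wstar \<omega> + c * V n / 2 * (norm wstar)\<^sup>2"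
        using nmin card_Sn unfolding reg_risk_def by simp
      show "0 < c * V n" using c_pos Vn by simp
      show "c * V n \<le> c * V m" using c_pos Vmn by simp
      show "0 \<le> (norm (wm \<omega>))\<^sup>2" by simp
    qed
    then show "Dn \<omega> \<le> G \<omega>" unfolding Dn_def G_def E1_def reg_risk_def card_Sn card_Sm by simp
  qed
  have AEb: "AE \<omega> in M. 0 \<le> Dn \<omega> \<and> Dn \<omega> \<le> G \<omega>"
  proof -
    have "AE \<omega> in M. \<omega> \<in> space M \<and> (\<forall>w. \<bar>exp_loss P f w - emp_loss f Z Sm w \<omega>\<bar> \<le> U Sm \<omega>)
       \<and> (\<forall>w. \<bar>exp_loss P f w - emp_loss f Z Sd w \<omega>\<bar> \<le> U Sd \<omega>)
       \<and> (\<forall>w. \<bar>exp_loss P f w - emp_loss f Z Sn w \<omega>\<bar> \<le> U Sn \<omega>)"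
      using Um Ud Un by (intro AE_conjI AE_space) auto
    then show ?thesis by (rule eventually_mono) (use pwb in blast)
  qed
  have Dint: "integrable M Dn"
    by (rule Bochner_Integration.integrable_bound[OF Gint Dmeas]) (rule eventually_mono[OF AEb], auto)
  have DG: "(\<integral>\<omega>. Dn \<omega> \<partial>M) \<le> (\<integral>\<omega>. G \<omega> \<partial>M)"
    by (rule integral_mono_AE[OF Dint Gint]) (rule eventually_mono[OF AEb], auto)
  have E1int: "integrable M E1" using wm_integrable unfolding E1_def by simp
  have Geq: "(\<integral>\<omega>. G \<omega> \<partial>M) = (\<integral>\<omega>. E1 \<omega> \<partial>M) + 2*(real n - real m)/real n*((\<integral>\<omega>. U Sd \<omega> \<partial>M) + (\<integral>\<omega>. U Sm \<omega> \<partial>M))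
      + (c*V m - c*V n)/2*(norm wstar)\<^sup>2 + 2*(c*V m - c*V n)/(c*V n)*(\<integral>\<omega>. U Sn \<omega> \<partial>M)"
    unfolding G_def using E1int Um Ud Un
    by (simp add: Bochner_Integration.integral_add Bochner_Integration.integrable_add prob_space)
  have b1: "(\<integral>\<omega>. E1 \<omega> \<partial>M) \<le> \<delta>" using wm_accuracy unfolding E1_def by simp
  have a0: "0 \<le> 2*(real n - real m)/real n" using m_lt_n by simp
  have b2: "2*(real n - real m)/real n*((\<integral>\<omega>. U Sd \<omega> \<partial>M) + (\<integral>\<omega>. U Sm \<omega> \<partial>M))
      \<le> 2*(real n - real m)/real n*(V (n - m) + V m)"
    by (rule mult_left_mono[OF _ a0]) (use Um Ud cSd card_Sm in auto)
  have bb: "0 \<le> 2*(c*V m - c*V n)/(c*V n)" using c_pos Vn Vmn by simp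
  have b3: "2*(c*V m - c*V n)/(c*V n)*(\<integral>\<omega>. U Sn \<omega> \<partial>M) \<le> 2*(c*V m - c*V n)/(c*V n) * V n"
    by (rule mult_left_mono[OF _ bb]) (use Un card_Sn in auto)
  have b4: "2*(c*V m - c*V n)/(c*V n) * V n = 2 * (V m - V n)"
    using c_pos Vn by (simp add: field_simps)
  have b5: "(c*V m - c*V n)/2*(norm wstar)\<^sup>2 = c * (V m - V n) / 2 * (norm wstar)\<^sup>2"
    by (simp add: algebra_simps)
  have b6: "real (n - m) = real n - real m" using m_lt_n by (simp add: of_nat_diff)
  have "(\<integral>\<omega>. Dn \<omega> \<partial>M) \<le> \<delta> + 2 * real (n - m) / real n * (V (n - m) + V m) + 2 * (V m - V n)
            + c * (V m - V n) / 2 * (norm wstar)\<^sup>2"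
    unfolding b6 using DG Geq b1 b2 b3 b4 b5 by linarith
  then show ?thesis using Dint unfolding Dn_def by simp
qed


end
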